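(* Let $(G,G_+,\Sigma)$ be a scaled ordered abelian group such that $(G,G_+)$ is weakly unperforated, and suppose that $n\,\hat{\cdot}\,\Sigma=G_+$ for some $n\in\mathbb{N}$. Then $\Sigma=G_+$.
   Context: A scaled ordered abelian group is a triple $(G,G_+,\Sigma)$ where $(G,G_+)$ is an ordered abelian group and $\Sigma\subseteq G_+$ satisfies: (i) for all $x_1,x_2\in\Sigma$ there is $x\in\Sigma$ with $x_1\le x$, $x_2\le x$; (ii) if $x\in G_+$, $y\in\Sigma$ and $x\le y$ then $x\in\Sigma$; (iii) for every $x\in G_+$ there are $y\in\Sigma$ and $k\in\mathbb{N}$ with $x\le ky$. For such $\Sigma$, $n\,\hat{\cdot}\,\Sigma$ denotes the set of $y\in G_+$ such that $0\le y\le nx$ for some $x\in\Sigma$. An ordered abelian group $(G,G_+)$ is weakly unperforated if (i) whenever $x\in G$, $m\in\mathbb{N}$ and $mx\in G_+$, there is a torsion element $t$ with $x+t\in G_+$ and $mt=0$; and (ii) whenever $y\in G_+$, $t$ is torsion, $n\in\mathbb{N}$ and $ny+t\in G_+$, then $y\pm t\in G_+$. *)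

theory Defs
  imports Main
begin

fun nsmul :: "nat \<Rightarrow> 'a::monoid_add \<Rightarrow> 'a" where
  "nsmul 0 x = 0"
| "nsmul (Suc n) x = x + nsmul n x"

definition ordered_ab_group :: "'a::ab_group_add set \<Rightarrow> bool" where
  "ordered_ab_group Gp \<longleftrightarrow> 0 \<in> Gp \<and> (\<forall>x\<in>Gp. \<forall>y\<in>Gp. x + y \<in> Gp)
     \<and> (\<forall>x. x \<in> Gp \<and> - x \<in> Gp \<longrightarrow> x = 0)"

definition ole :: "'a::ab_group_add set \<Rightarrow> 'a \<Rightarrow> 'a \<Rightarrow> bool" where
  "ole Gp x y \<longleftrightarrow> y - x \<in> Gp"

definition scale :: "'a::ab_group_add set \<Rightarrow> 'a set \<Rightarrow> bool" where
  "scale Gp S \<longleftrightarrow> S \<subseteq> Gp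
     \<and> (\<forall>x1\<in>S. \<forall>x2\<in>S. \<exists>x\<in>S. ole Gp x1 x \<and> ole Gp x2 x)
     \<and> (\<forall>x\<in>Gp. \<forall>y\<in>S. ole Gp x y \<longrightarrow> x \<in> S)
     \<and> (\<forall>x\<in>Gp. \<exists>y\<in>S. \<exists>k::nat. k \<ge> 1 \<and> ole Gp x (nsmul k y))"

definition scaled_ordered_ab_group :: "'a::ab_group_add set \<Rightarrow> 'a set \<Rightarrow> bool" where
  "scaled_ordered_ab_group Gp S \<longleftrightarrow> ordered_ab_group Gp \<and> scale Gp S"

definition torsion :: "'a::ab_group_add \<Rightarrow> bool" where
  "torsion t \<longleftrightarrow> (\<exists>k::nat. k \<ge> 1 \<and> nsmul k t = 0)"

definition weakly_unperforated :: "'a::ab_group_add set \<Rightarrow> bool" where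
  "weakly_unperforated Gp \<longleftrightarrow>
     (\<forall>x (m::nat). m \<ge> 1 \<and> nsmul m x \<in> Gp \<longrightarrow>
        (\<exists>t. torsion t \<and> x + t \<in> Gp \<and> nsmul m t = 0))
   \<and> (\<forall>y t (n::nat). y \<in> Gp \<and> torsion t \<and> n \<ge> 1 \<and> nsmul n y + t \<in> Gp \<longrightarrow>
        y + t \<in> Gp \<and> y - t \<in> Gp)"

definition mult_scale :: "'a::ab_group_add set \<Rightarrow> nat \<Rightarrow> 'a set \<Rightarrow> 'a set" where
  "mult_scale Gp n S = {y \<in> Gp. \<exists>x\<in>S. ole Gp y (nsmul n x)}"

end

theory Submission
  imports Defs
begin

lemma nsmul_add: "nsmul n (a + b) = nsmul n a + nsmul n (b::'a::ab_group_add)"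
  by (induction n) (simp_all add: algebra_simps)

lemma nsmul_neg: "nsmul n (- a) = - nsmul n (a::'a::ab_group_add)"
  by (induction n) (simp_all add: algebra_simps)

lemma nsmul_diff: "nsmul n (a - b) = nsmul n a - nsmul n (b::'a::ab_group_add)"
  using nsmul_add[of n a "-b"] nsmul_neg[of n b] by simp

lemma nsmul_closed: "ordered_ab_group Gp \<Longrightarrow> x \<in> Gp \<Longrightarrow> nsmul n x \<in> Gp"
  by (induction n) (auto simp: ordered_ab_group_def)

lemma torsion_neg: "torsion t \<Longrightarrow> torsion (- t)"
  unfolding torsion_def by (metis nsmul_neg neg_equal_0_iff_equal)

theorem proposition1p10:
  fixes Gp S :: "'a::ab_group_add set" and n :: nat
  assumes "scaled_ordered_ab_group Gp S"
    and "weakly_unperforated Gp"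
    and "n \<ge> 1"
    and "mult_scale Gp n S = Gp"
  shows "S = Gp"
proof
  have og: "ordered_ab_group Gp" and sc: "scale Gp S"
    using assms(1) by (auto simp: scaled_ordered_ab_group_def)
  have add: "\<And>a b. a \<in> Gp \<Longrightarrow> b \<in> Gp \<Longrightarrow> a + b \<in> Gp"
    using og by (auto simp: ordered_ab_group_def)
  have SG: "S \<subseteq> Gp" using sc by (auto simp: scale_def)
  have dir: "\<And>a b. a \<in> S \<Longrightarrow> b \<in> S \<Longrightarrow> \<exists>x\<in>S. x - a \<in> Gp \<and> x - b \<in> Gp"
    using sc by (auto simp: scale_def ole_def)
  have her: "\<And>a b. a \<in> Gp \<Longrightarrow> b \<in> S \<Longrightarrow> b - a \<in> Gp \<Longrightarrow> a \<in> S"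
    using sc by (auto simp: scale_def ole_def)
  have wi: "\<And>x m. m \<ge> 1 \<Longrightarrow> nsmul m x \<in> Gp \<Longrightarrow> \<exists>t. torsion t \<and> x + t \<in> Gp \<and> nsmul m t = 0"
    using assms(2) by (auto simp: weakly_unperforated_def)
  have wii: "\<And>y t N. y \<in> Gp \<Longrightarrow> torsion t \<Longrightarrow> N \<ge> 1 \<Longrightarrow> nsmul N y + t \<in> Gp \<Longrightarrow>
        y + t \<in> Gp \<and> y - t \<in> Gp"
    using assms(2) unfolding weakly_unperforated_def by blast
  have ms: "\<And>z. z \<in> Gp \<Longrightarrow> \<exists>x\<in>S. nsmul n x - z \<in> Gp"
    using assms(4) unfolding mult_scale_def ole_def by blast
  show "Gp \<subseteq> S"
  proof
    fix y assume y: "y \<in> Gp"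
    obtain x1 where x1: "x1 \<in> S" "nsmul n x1 - nsmul n y \<in> Gp"
      using ms[OF nsmul_closed[OF og y]] by blast
    then obtain t1 where t1: "torsion t1" "x1 - y + t1 \<in> Gp"
      using wi[of n "x1 - y"] assms(3) by (auto simp: nsmul_diff)
    have x1G: "x1 \<in> Gp" using x1 SG by blast
    have "x1 + t1 \<in> Gp" using add[OF t1(2) y] by (simp add: algebra_simps)
    hence x1t: "x1 - t1 \<in> Gp" using wii[of x1 t1 1] x1G t1 by simp
    have "nsmul n (x1 + x1) \<in> Gp" using nsmul_closed[OF og] add[OF x1G x1G] by blast
    then obtain x2' where x2': "x2' \<in> S" "nsmul n x2' - nsmul n (x1 + x1) \<in> Gp"
      using ms by blast
    obtain x2 where x2: "x2 \<in> S" "x2 - x2' \<in> Gp" "x2 - x1 \<in> Gp"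
      using dir[OF x2'(1) x1(1)] by blast
    have "nsmul n (x2 - x2') + (nsmul n x2' - nsmul n (x1 + x1)) \<in> Gp"
      using add[OF nsmul_closed[OF og x2(2)] x2'(2)] .
    hence "nsmul n (x2 - (x1 + x1)) \<in> Gp" by (simp add: nsmul_diff)
    then obtain t2 where t2: "torsion t2" "x2 - (x1 + x1) + t2 \<in> Gp"
      using wi assms(3) by blast
    define u where "u = x2 - x1"
    have uG: "u \<in> Gp" using x2 u_def by simp
    have "x2 - (x1 + x1) + t2 + x1 = u + t2" using u_def by (simp add: algebra_simps)
    hence "u + t2 \<in> Gp" using add[OF t2(2) x1G] by metis
    hence ut2: "u - t2 \<in> Gp" using wii[of u t2 1] uG t2 by simp
    have "x2 - (x1 + x1) + t2 + (x1 - t1) = u + t2 - t1" using u_def by (simp add: algebra_simps)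
    hence "u + t2 - t1 \<in> Gp" using add[OF t2(2) x1t] by metis
    hence "u + t2 - t1 + (u - t2) \<in> Gp" using add[OF _ ut2] by blast
    moreover have "u + t2 - t1 + (u - t2) = nsmul 2 u + (- t1)" by (simp add: numeral_2_eq_2 algebra_simps)
    ultimately have "nsmul 2 u + (- t1) \<in> Gp" by metis
    hence "u - t1 \<in> Gp" using wii[of u "- t1" 2] uG torsion_neg[OF t1(1)] by simp
    moreover have "x1 - y + t1 + (u - t1) = x2 - y" using u_def by (simp add: algebra_simps)
    ultimately have "x2 - y \<in> Gp" using add[OF t1(2)] by metis
    thus "y \<in> S" using her[OF y x2(1)] by blast
  qed
qed (use assms(1) in \<open>auto simp: scaled_ordered_ab_group_def scale_def\<close>)

end
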